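(* Let $(S,E,f)$ be a reduced and closed observation table for $U$ and $D$ as defined below. If $|S|=\mathit{Ind}(\sim_{U,D})$, then $\mathcal{T}_{S,f}$ is isomorphic to $\mathcal{T}_{U,D}$.
   Context: $\Sigma$ is a finite alphabet, $U\subseteq\Sigma^\omega$ an $\omega$-language recognizable by a weak deterministic Büchi automaton, and $D\subseteq\Sigma^\omega$ a regular set with trivial right-congruence (i.e. for all $w\in\Sigma^*,\alpha\in\Sigma^\omega$: $\alpha\in D\iff w\alpha\in D$). $w\sim_{U,D}w'$ iff for all $\alpha\in\Sigma^\omega\setminus D$: $w\alpha\in U\iff w'\alpha\in U$; it is a right-congruence, $\mathit{Ind}(\sim_{U,D})$ is its number of classes, and $\mathcal{T}_{U,D}$ is its induced transition system (states the classes $[u]$, initial $[\epsilon]$, transitions $[u]\xrightarrow{\sigma}[u\sigma]$). An observation table $(S,E,f)$ consists of a prefix-closed finite $S\subseteq\Sigma^*$, a suffix-closed finite set $E$ of ultimately periodic words with $E\cap D=\emptyset$, and $f:(S\cup S\Sigma)\times E\to\{\text{yes},\text{no}\}$ with $f(s,\alpha)=\text{yes}$ iff $s\alpha\in U$. For $s\in S\cup S\Sigma$ let $f_s:E\to\{\text{yes},\text{no}\}$, $f_s(\alpha)=f(s,\alpha)$. The table is reduced if $f_s\neq f_t$ for distinct $s,t\in S$, and closed if for every $s\in S\Sigma$ there is $t\in S$ with $f_s=f_t$. For a reduced closed table, $\mathcal{T}_{S,f}=(\Sigma,S,\delta_f,\epsilon)$ with $\delta_f(s,\sigma)$ the unique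 $t\in S$ with $f_{s\sigma}=f_t$. *)

theory Defs
  imports Main "HOL-Library.Omega_Words_Fun"
begin

definition dba :: "nat set \<Rightarrow> nat \<Rightarrow> (nat \<Rightarrow> 'a \<Rightarrow> nat) \<Rightarrow> nat set \<Rightarrow> bool" where
  "dba Q q0 \<delta> F \<longleftrightarrow> finite Q \<and> q0 \<in> Q \<and> F \<subseteq> Q \<and> (\<forall>q\<in>Q. \<forall>a. \<delta> q a \<in> Q)"

definition dba_run :: "(nat \<Rightarrow> 'a \<Rightarrow> nat) \<Rightarrow> nat \<Rightarrow> 'a word \<Rightarrow> nat \<Rightarrow> nat" where
  "dba_run \<delta> q0 \<alpha> n = foldl \<delta> q0 (prefix n \<alpha>)"

definition dba_lang :: "(nat \<Rightarrow> 'a \<Rightarrow> nat) \<Rightarrow> nat \<Rightarrow> nat set \<Rightarrow> 'a word set" where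
  "dba_lang \<delta> q0 F = {\<alpha>. \<exists>\<^sub>\<infinity> n. dba_run \<delta> q0 \<alpha> n \<in> F}"

text \<open>Weak: every strongly connected component is either entirely accepting or entirely
  rejecting, i.e. mutually reachable states agree on membership in F.\<close>
definition weak_dba :: "nat set \<Rightarrow> nat \<Rightarrow> (nat \<Rightarrow> 'a \<Rightarrow> nat) \<Rightarrow> nat set \<Rightarrow> bool" where
  "weak_dba Q q0 \<delta> F \<longleftrightarrow> dba Q q0 \<delta> F \<and>
     (\<forall>p\<in>Q. \<forall>q\<in>Q. (\<exists>w. foldl \<delta> p w = q) \<and> (\<exists>w. foldl \<delta> q w = p) \<longrightarrow> (p \<in> F \<longleftrightarrow> q \<in> F))"

definition WDBA_recognizable :: "'a word set \<Rightarrow> bool" where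
  "WDBA_recognizable U \<longleftrightarrow> (\<exists>Q q0 \<delta> F. weak_dba Q q0 \<delta> F \<and> U = dba_lang \<delta> q0 F)"

definition nba :: "nat set \<Rightarrow> nat set \<Rightarrow> (nat \<Rightarrow> 'a \<Rightarrow> nat set) \<Rightarrow> nat set \<Rightarrow> bool" where
  "nba Q I \<Delta> F \<longleftrightarrow> finite Q \<and> I \<subseteq> Q \<and> F \<subseteq> Q \<and> (\<forall>q\<in>Q. \<forall>a. \<Delta> q a \<subseteq> Q)"

definition nba_lang :: "nat set \<Rightarrow> (nat \<Rightarrow> 'a \<Rightarrow> nat set) \<Rightarrow> nat set \<Rightarrow> 'a word set" where
  "nba_lang I \<Delta> F = {\<alpha>. \<exists>r. r 0 \<in> I \<and> (\<forall>n. r (Suc n) \<in> \<Delta> (r n) (\<alpha> n)) \<and> (\<exists>\<^sub>\<infinity> n. r n \<in> F)}"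

definition omega_regular :: "'a word set \<Rightarrow> bool" where
  "omega_regular D \<longleftrightarrow> (\<exists>Q I \<Delta> F. nba Q I \<Delta> F \<and> D = nba_lang I \<Delta> F)"

definition trivial_right_congruence :: "'a word set \<Rightarrow> bool" where
  "trivial_right_congruence D \<longleftrightarrow> (\<forall>w \<alpha>. \<alpha> \<in> D \<longleftrightarrow> w \<frown> \<alpha> \<in> D)"

definition ultimately_periodic :: "'a word \<Rightarrow> bool" where
  "ultimately_periodic \<alpha> \<longleftrightarrow> (\<exists>u v. v \<noteq> [] \<and> \<alpha> = u \<frown> v\<^sup>\<omega>)"

definition simUD :: "'a word set \<Rightarrow> 'a word set \<Rightarrow> ('a list \<times> 'a list) set" where
  "simUD U D = {(w, w'). \<forall>\<alpha>. \<alpha> \<notin> D \<longrightarrow> (w \<frown> \<alpha> \<in> U \<longleftrightarrow> w' \<frown> \<alpha> \<in> U)}"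

definition Ind :: "'a word set \<Rightarrow> 'a word set \<Rightarrow> nat" where
  "Ind U D = card (UNIV // simUD U D)"

text \<open>T_{U,D}: states are the classes, initial [\<epsilon>], transitions [u] -\<sigma>-> [u\<sigma>].\<close>
definition TUD_states :: "'a word set \<Rightarrow> 'a word set \<Rightarrow> 'a list set set" where
  "TUD_states U D = UNIV // simUD U D"

definition TUD_init :: "'a word set \<Rightarrow> 'a word set \<Rightarrow> 'a list set" where
  "TUD_init U D = simUD U D `` {[]}"

definition TUD_delta :: "'a word set \<Rightarrow> 'a word set \<Rightarrow> 'a list set \<Rightarrow> 'a \<Rightarrow> 'a list set" where
  "TUD_delta U D C \<sigma> = simUD U D `` {(SOME u. u \<in> C) @ [\<sigma>]}"

definition prefix_closed :: "'a list set \<Rightarrow> bool" where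
  "prefix_closed S \<longleftrightarrow> (\<forall>s\<in>S. \<forall>n. take n s \<in> S)"

definition suffix_closed :: "'a word set \<Rightarrow> bool" where
  "suffix_closed E \<longleftrightarrow> (\<forall>\<alpha>\<in>E. \<forall>n. suffix n \<alpha> \<in> E)"

text \<open>f is only meaningful on (S \<union> S\<Sigma>) \<times> E; True = yes, False = no.\<close>
definition obs_table :: "'a word set \<Rightarrow> 'a word set \<Rightarrow> 'a list set \<Rightarrow> 'a word set
    \<Rightarrow> ('a list \<Rightarrow> 'a word \<Rightarrow> bool) \<Rightarrow> bool" where
  "obs_table U D S E f \<longleftrightarrow>
     finite S \<and> [] \<in> S \<and> prefix_closed S \<and>
     finite E \<and> suffix_closed E \<and> (\<forall>\<alpha>\<in>E. ultimately_periodic \<alpha>) \<and> E \<inter> D = {} \<and>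
     (\<forall>s \<in> S \<union> {t @ [\<sigma>] | t \<sigma>. t \<in> S}. \<forall>\<alpha>\<in>E. f s \<alpha> \<longleftrightarrow> s \<frown> \<alpha> \<in> U)"

definition same_row :: "'a word set \<Rightarrow> ('a list \<Rightarrow> 'a word \<Rightarrow> bool) \<Rightarrow> 'a list \<Rightarrow> 'a list \<Rightarrow> bool" where
  "same_row E f s t \<longleftrightarrow> (\<forall>\<alpha>\<in>E. f s \<alpha> = f t \<alpha>)"

definition reduced :: "'a list set \<Rightarrow> 'a word set \<Rightarrow> ('a list \<Rightarrow> 'a word \<Rightarrow> bool) \<Rightarrow> bool" where
  "reduced S E f \<longleftrightarrow> (\<forall>s\<in>S. \<forall>t\<in>S. s \<noteq> t \<longrightarrow> \<not> same_row E f s t)"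

definition closed :: "'a list set \<Rightarrow> 'a word set \<Rightarrow> ('a list \<Rightarrow> 'a word \<Rightarrow> bool) \<Rightarrow> bool" where
  "closed S E f \<longleftrightarrow> (\<forall>s\<in>S. \<forall>\<sigma>. \<exists>t\<in>S. same_row E f (s @ [\<sigma>]) t)"

text \<open>Transition function of T_{S,f} (states S, initial \<epsilon> = []).\<close>
definition delta_f :: "'a list set \<Rightarrow> 'a word set \<Rightarrow> ('a list \<Rightarrow> 'a word \<Rightarrow> bool) \<Rightarrow> 'a list \<Rightarrow> 'a \<Rightarrow> 'a list" where
  "delta_f S E f s \<sigma> = (THE t. t \<in> S \<and> same_row E f (s @ [\<sigma>]) t)"

definition ts_iso :: "'q1 set \<Rightarrow> ('q1 \<Rightarrow> 'a \<Rightarrow> 'q1) \<Rightarrow> 'q1 \<Rightarrow> 'q2 set \<Rightarrow> ('q2 \<Rightarrow> 'a \<Rightarrow> 'q2) \<Rightarrow> 'q2 \<Rightarrow> bool" where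
  "ts_iso Q1 d1 i1 Q2 d2 i2 \<longleftrightarrow>
     (\<exists>h. bij_betw h Q1 Q2 \<and> h i1 = i2 \<and> (\<forall>q\<in>Q1. \<forall>\<sigma>. h (d1 q \<sigma>) = d2 (h q) \<sigma>))"

end

theory Submission
  imports Defs
begin

lemma sim_equiv: "equiv UNIV (simUD U D)"
  unfolding equiv_def refl_on_def sym_def trans_def simUD_def by auto

lemma sim_right:
  assumes "trivial_right_congruence D" "(u, v) \<in> simUD U D"
  shows "(u @ [\<sigma>], v @ [\<sigma>]) \<in> simUD U D"
proof -
  have "\<forall>\<alpha>. \<alpha> \<notin> D \<longrightarrow> ((u @ [\<sigma>]) \<frown> \<alpha> \<in> U \<longleftrightarrow> (v @ [\<sigma>]) \<frown> \<alpha> \<in> U)"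
  proof (intro allI impI)
    fix \<alpha> :: "'a word" assume "\<alpha> \<notin> D"
    then have "[\<sigma>] \<frown> \<alpha> \<notin> D" using assms(1) unfolding trivial_right_congruence_def by blast
    then show "((u @ [\<sigma>]) \<frown> \<alpha> \<in> U \<longleftrightarrow> (v @ [\<sigma>]) \<frown> \<alpha> \<in> U)"
      using assms(2) unfolding simUD_def by (simp flip: conc_conc)
  qed
  then show ?thesis unfolding simUD_def by simp
qed

theorem lemma5:
  fixes U D :: "('a::finite) word set"
    and S :: "'a list set" and E :: "'a word set" and f :: "'a list \<Rightarrow> 'a word \<Rightarrow> bool"
  assumes "WDBA_recognizable U"
    and "omega_regular D"
    and "trivial_right_congruence D"
    and "obs_table U D S E f"
    and "reduced S E f"
    and "closed S E f"
    and "card S = Ind U D"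
  shows "ts_iso S (delta_f S E f) [] (TUD_states U D) (TUD_delta U D) (TUD_init U D)"
proof -
  let ?R = "simUD U D"
  define h where "h s = ?R `` {s}" for s
  have eqv: "equiv UNIV ?R" by (rule sim_equiv)
  have OT: "finite S \<and> [] \<in> S \<and> E \<inter> D = {} \<and>
     (\<forall>s \<in> S \<union> {t @ [\<sigma>] | t \<sigma>. t \<in> S}. \<forall>\<alpha>\<in>E. f s \<alpha> \<longleftrightarrow> s \<frown> \<alpha> \<in> U)"
    using assms(4) unfolding obs_table_def by (elim conjE) (intro conjI; assumption)
  have finS: "finite S" and eS: "[] \<in> S" and ED: "E \<inter> D = {}"
    using OT by simp_all
  have fS: "f s \<alpha> \<longleftrightarrow> s \<frown> \<alpha> \<in> U" if "s \<in> S \<union> {t @ [\<sigma>] | t \<sigma>. t \<in> S}" "\<alpha> \<in> E" for s \<alpha>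
    using OT[THEN conjunct2, THEN conjunct2, THEN conjunct2, rule_format, OF that] .
  have row: "same_row E f s t" if "s \<in> S \<union> {t @ [\<sigma>] | t \<sigma>. t \<in> S}" "t \<in> S" "(s, t) \<in> ?R" for s t
    unfolding same_row_def
  proof
    fix \<alpha> assume a: "\<alpha> \<in> E"
    then have "\<alpha> \<notin> D" using ED by blast
    then show "f s \<alpha> = f t \<alpha>" using fS[OF that(1) a] fS[of t \<alpha>] that(2,3) a
      unfolding simUD_def by auto
  qed
  have inj: "inj_on h S"
  proof (rule inj_onI)
    fix s t assume st: "s \<in> S" "t \<in> S" "h s = h t"
    then have "(s, t) \<in> ?R" unfolding h_def using eq_equiv_class_iff[OF eqv] by blast
    then have "same_row E f s t" using row st by blast
    then show "s = t" using assms(5) st unfolding reduced_def by blast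
  qed
  have sub: "h ` S \<subseteq> UNIV // ?R" unfolding h_def quotient_def by blast
  have cS: "card S \<ge> 1" using finS eS by (metis One_nat_def Suc_leI card_gt_0_iff empty_iff)
  have finQ: "finite (UNIV // ?R)"
    using assms(7) cS unfolding Ind_def by (metis card.infinite not_one_le_zero)
  have "card (h ` S) = card (UNIV // ?R)"
    using card_image[OF inj] assms(7) unfolding Ind_def by simp
  then have img: "h ` S = UNIV // ?R" using card_subset_eq[OF finQ sub] by simp
  have bij: "bij_betw h S (TUD_states U D)"
    unfolding bij_betw_def TUD_states_def using inj img by simp
  have init: "h [] = TUD_init U D" unfolding h_def TUD_init_def by simp
  have trans: "h (delta_f S E f s \<sigma>) = TUD_delta U D (h s) \<sigma>" if sS: "s \<in> S" for s \<sigma>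
  proof -
    have "h (s @ [\<sigma>]) \<in> h ` S" using img unfolding h_def quotient_def by blast
    then obtain t where tS: "t \<in> S" and ht: "h t = h (s @ [\<sigma>])" by auto
    then have st: "(s @ [\<sigma>], t) \<in> ?R" unfolding h_def
      using eq_equiv_class_iff[OF eqv] by blast
    have mem: "s @ [\<sigma>] \<in> S \<union> {t @ [\<sigma>] | t \<sigma>. t \<in> S}" using sS by blast
    have sr: "same_row E f (s @ [\<sigma>]) t" using row[OF mem tS st] .
    have uniq: "t' = t" if "t' \<in> S" "same_row E f (s @ [\<sigma>]) t'" for t'
    proof -
      have "same_row E f t' t" using that(2) sr unfolding same_row_def by auto
      then show ?thesis using assms(5) that(1) tS unfolding reduced_def by blast
    qed
    have d: "delta_f S E f s \<sigma> = t"
      unfolding delta_f_def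
    proof (rule the_equality)
      show "t \<in> S \<and> same_row E f (s @ [\<sigma>]) t" using tS sr by (rule conjI)
    next
      fix x assume "x \<in> S \<and> same_row E f (s @ [\<sigma>]) x"
      then show "x = t" using uniq by blast
    qed
    define u where "u = (SOME u. u \<in> h s)"
    have "s \<in> h s" unfolding h_def simUD_def by simp
    then have "u \<in> h s" unfolding u_def by (rule someI[of "\<lambda>u. u \<in> h s"])
    then have "(s, u) \<in> ?R" unfolding h_def by simp
    then have "(s @ [\<sigma>], u @ [\<sigma>]) \<in> ?R" by (rule sim_right[OF assms(3)])
    then have hu: "h (s @ [\<sigma>]) = h (u @ [\<sigma>])" unfolding h_def
      by (simp add: eq_equiv_class_iff[OF eqv])
    have "TUD_delta U D (h s) \<sigma> = h (u @ [\<sigma>])"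
      unfolding TUD_delta_def u_def h_def ..
    then show ?thesis using d ht hu by simp
  qed
  show ?thesis unfolding ts_iso_def
    by (rule exI[of _ h]) (use bij init trans in simp)
qed

end
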